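(* Let $n\ge 2$, let $c_k$ be a chain over $[n]$ with $1\le k\le n-1$, and let $p,q$ be distinct propositional letters. Then none of the following is derivable in $\mathbf{CPN}_n$: (i) $\neg_{c_k}p\to_{(n)}(p\to_{(n)}q)$; (ii) $(\neg_{c_k}p\to_{(n)}\neg_{c_k}q)\to_{(n)}(q\to_{(n)}p)$; (iii) $(p\to_{(n)}q)\to_{(n)}(\neg_{c_k}q\to_{(n)}\neg_{c_k}p)$; (iv) $(p\vee_{(n)}q)\wedge_{(n)}\neg_{c_k}p\to_{(n)}q$; (v) $(p\to_{(n)}q)\wedge_{(n)}\neg_{c_k}q\to_{(n)}\neg_{c_k}p$; (vi) $\neg_{c_k}p\to_{(n)}\neg_{c_k}(p\wedge_{(n)}q)$; (vii) $\neg_{c_k}p\vee_{(n)}\neg_{c_k}q\to_{(n)}\neg_{c_k}(p\wedge_{(n)}q)$; (viii) $\neg_{c_k}(p\vee_{(n)}q)\to_{(n)}\neg_{c_k}p\wedge_{(n)}\neg_{c_k}q$.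
   Context: Fix $n\in\mathbb{N}$, $n\ge 1$, and write $[n]=\{1,\dots,n\}$. Chains: a chain over $[n]$ is a finite sequence of distinct elements of $[n]$; chains with the same length and the same symbols are identified, so a chain is effectively a subset of $[n]$. $c_k$ denotes a chain with $k$ symbols, $\epsilon$ the empty chain, and $(n)$ the chain consisting of all symbols of $[n]$. For chains $c,d$: the concatenation $c\cdot d$ is the chain of symbols occurring in $c$ or in $d$; the coconcatenation $c\otimes d$ is the chain of symbols occurring in exactly one of $c,d$; $d$ is a subchain of $c$ if every symbol of $d$ is a symbol of $c$. The complementary chain $c'_{n-k}$ of $c_k$ is the chain of the symbols of $[n]$ not occurring in $c_k$. Language of $\mathbf{CPN}_n$: a countable set $P_n$ of propositional letters; constants $\perp_c$ for each chain $c$ over $[n]$ with $1\le |c|\le n-1$, and constants $\perp_{(n)}$ (contradiction) and $\top_{(n)}$ (truth); a unary connective $\neg_c$ for each nonempty chain $c$ over $[n]$ ($\neg_{(n)}$ is the strong negation; the $\neg_c$ with $|c|\le n-1$ are weak negations); a binary connective $\to_{(n)}$. Formulas: propositional letters and constants are formulas; if $\varphi,\psi$ are formulas then so are $\neg_c\varphi$ and $(\varphi\to_{(n)}\psi)$. Conventions: $\neg_\epsilon\varphi:=\varphi$, $\perp_\epsilon:=\top_{(n)}$, and $\perp_c$ for $c=(n)$ means $\perp_{(n)}$. Abbreviations: $\varphi\wedge_{(n)}\psi:=\neg_{(n)}(\varphi\to_{(n)}\neg_{(n)}\psi)$, $\varphi\vee_{(n)}\psi:=\neg_{(n)}\varphi\to_{(n)}\psi$,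 $\varphi\leftrightarrow_{(n)}\psi:=(\varphi\to_{(n)}\psi)\wedge_{(n)}(\psi\to_{(n)}\varphi)$. Axioms of $\mathbf{CPN}_n$, for all formulas $\varphi,\psi,\chi$ and all nonempty chains $c_k,c_r$ over $[n]$: (A1) $\varphi\to_{(n)}(\psi\to_{(n)}\varphi)$; (A2) $(\varphi\to_{(n)}(\psi\to_{(n)}\chi))\to_{(n)}((\varphi\to_{(n)}\psi)\to_{(n)}(\varphi\to_{(n)}\chi))$; (A3) $(\neg_{(n)}\psi\to_{(n)}\neg_{(n)}\varphi)\to_{(n)}((\neg_{(n)}\psi\to_{(n)}\varphi)\to_{(n)}\psi)$; (A4) $\varphi\to_{(n)}(\perp_{c_k}\to_{(n)}\neg_{c_k}\varphi)$; (A5) $\neg_{c_k}\neg_{c_r}\varphi\leftrightarrow_{(n)}\neg_{c_k\otimes c_r}\varphi$; (A6) $\neg_{c_k}\perp_{c_r}\leftrightarrow_{(n)}\perp_{c_k\otimes c_r}$; (A7) $\perp_{c_k}\to_{(n)}\perp_{c_r}$, whenever $c_r$ is a subchain of $c_k$. The only rule of inference is modus ponens (from $\varphi$ and $\varphi\to_{(n)}\psi$ infer $\psi$). For a set $\Sigma$ of formulas, $\Sigma\vdash_{(n)}\varphi$ means there is a finite sequence of formulas ending with $\varphi$, each of which is an axiom, a member of $\Sigma$, or obtained from two earlier members by modus ponens; $\vdash_{(n)}\varphi$ means $\emptyset\vdash_{(n)}\varphi$. *)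

theory Defs
  imports Main
begin

text \<open>Chains over [n] are represented as finite sets of symbols (chains with the same
symbols are identified). Propositional letters are indexed by nat (countably many).\<close>

datatype fm =
    Var nat
  | Bot "nat set"           \<comment> \<open>\<bottom>_c for a nonempty chain c; Bot {1..n} is \<bottom>_(n)\<close>
  | Top
  | Neg "nat set" fm
  | Imp fm fm

definition chain :: "nat \<Rightarrow> nat set \<Rightarrow> bool" where
  "chain n c \<longleftrightarrow> c \<subseteq> {1..n}"

definition nechain :: "nat \<Rightarrow> nat set \<Rightarrow> bool" where
  "nechain n c \<longleftrightarrow> chain n c \<and> c \<noteq> {}"

fun wf :: "nat \<Rightarrow> fm \<Rightarrow> bool" where
  "wf n (Var p) = True"
| "wf n (Bot c) = nechain n c"
| "wf n Top = True"
| "wf n (Neg c \<phi>) = (nechain n c \<and> wf n \<phi>)"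
| "wf n (Imp \<phi> \<psi>) = (wf n \<phi> \<and> wf n \<psi>)"

definition cocat :: "nat set \<Rightarrow> nat set \<Rightarrow> nat set" where
  "cocat c d = (c - d) \<union> (d - c)"

text \<open>Conventions: \<not>_\<epsilon> \<phi> = \<phi>, \<bottom>_\<epsilon> = \<top>_(n).\<close>
definition negc :: "nat set \<Rightarrow> fm \<Rightarrow> fm" where
  "negc c \<phi> = (if c = {} then \<phi> else Neg c \<phi>)"

definition botc :: "nat set \<Rightarrow> fm" where
  "botc c = (if c = {} then Top else Bot c)"

definition SNeg :: "nat \<Rightarrow> fm \<Rightarrow> fm" where
  "SNeg n \<phi> = Neg {1..n} \<phi>"

definition And :: "nat \<Rightarrow> fm \<Rightarrow> fm \<Rightarrow> fm" where
  "And n \<phi> \<psi> = SNeg n (Imp \<phi> (SNeg n \<psi>))"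

definition Or :: "nat \<Rightarrow> fm \<Rightarrow> fm \<Rightarrow> fm" where
  "Or n \<phi> \<psi> = Imp (SNeg n \<phi>) \<psi>"

definition Iff :: "nat \<Rightarrow> fm \<Rightarrow> fm \<Rightarrow> fm" where
  "Iff n \<phi> \<psi> = And n (Imp \<phi> \<psi>) (Imp \<psi> \<phi>)"

inductive axiom :: "nat \<Rightarrow> fm \<Rightarrow> bool" for n where
  A1: "\<lbrakk>wf n \<phi>; wf n \<psi>\<rbrakk> \<Longrightarrow> axiom n (Imp \<phi> (Imp \<psi> \<phi>))"
| A2: "\<lbrakk>wf n \<phi>; wf n \<psi>; wf n \<chi>\<rbrakk> \<Longrightarrow>
        axiom n (Imp (Imp \<phi> (Imp \<psi> \<chi>)) (Imp (Imp \<phi> \<psi>) (Imp \<phi> \<chi>)))"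
| A3: "\<lbrakk>wf n \<phi>; wf n \<psi>\<rbrakk> \<Longrightarrow>
        axiom n (Imp (Imp (SNeg n \<psi>) (SNeg n \<phi>)) (Imp (Imp (SNeg n \<psi>) \<phi>) \<psi>))"
| A4: "\<lbrakk>wf n \<phi>; nechain n ck\<rbrakk> \<Longrightarrow> axiom n (Imp \<phi> (Imp (Bot ck) (Neg ck \<phi>)))"
| A5: "\<lbrakk>wf n \<phi>; nechain n ck; nechain n cr\<rbrakk> \<Longrightarrow>
        axiom n (Iff n (Neg ck (Neg cr \<phi>)) (negc (cocat ck cr) \<phi>))"
| A6: "\<lbrakk>nechain n ck; nechain n cr\<rbrakk> \<Longrightarrow>
        axiom n (Iff n (Neg ck (Bot cr)) (botc (cocat ck cr)))"
| A7: "\<lbrakk>nechain n ck; nechain n cr; cr \<subseteq> ck\<rbrakk> \<Longrightarrow> axiom n (Imp (Bot ck) (Bot cr))"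

inductive deriv :: "nat \<Rightarrow> fm set \<Rightarrow> fm \<Rightarrow> bool" for n \<Sigma> where
  ax: "axiom n \<phi> \<Longrightarrow> deriv n \<Sigma> \<phi>"
| hyp: "\<phi> \<in> \<Sigma> \<Longrightarrow> deriv n \<Sigma> \<phi>"
| mp: "\<lbrakk>deriv n \<Sigma> \<phi>; deriv n \<Sigma> (Imp \<phi> \<psi>)\<rbrakk> \<Longrightarrow> deriv n \<Sigma> \<psi>"

end

theory Submission
  imports Defs
begin

fun ev :: "nat \<Rightarrow> (nat \<Rightarrow> nat set) \<Rightarrow> fm \<Rightarrow> nat set" where
  "ev i V (Var p) = V p"
| "ev i V (Bot c) = c"
| "ev i V Top = {}"
| "ev i V (Neg c x) = (ev i V x - c) \<union> (c - ev i V x)"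
| "ev i V (Imp x y) = (if i \<in> ev i V x \<or> i \<notin> ev i V y then {} else {i})"

definition T :: "nat \<Rightarrow> (nat \<Rightarrow> nat set) \<Rightarrow> fm \<Rightarrow> bool" where
  "T i V x \<longleftrightarrow> i \<notin> ev i V x"

lemma T_Imp[simp]: "T i V (Imp x y) = (T i V x \<longrightarrow> T i V y)"
  by (auto simp: T_def)

lemma T_SNeg[simp]: "i \<in> {1..n} \<Longrightarrow> T i V (SNeg n x) = (\<not> T i V x)"
  by (auto simp: T_def SNeg_def)

lemma T_And[simp]: "i \<in> {1..n} \<Longrightarrow> T i V (And n x y) = (T i V x \<and> T i V y)"
  by (simp add: And_def)

lemma T_Or[simp]: "i \<in> {1..n} \<Longrightarrow> T i V (Or n x y) = (T i V x \<or> T i V y)"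
  by (auto simp add: Or_def)

lemma T_Iff[simp]: "i \<in> {1..n} \<Longrightarrow> T i V (Iff n x y) = (T i V x \<longleftrightarrow> T i V y)"
  by (auto simp add: Iff_def)

lemma T_Neg[simp]: "T i V (Neg c x) = (T i V x = (i \<notin> c))"
  by (auto simp: T_def)
lemma T_Bot[simp]: "T i V (Bot c) = (i \<notin> c)" by (simp add: T_def)
lemma T_Top[simp]: "T i V Top" by (simp add: T_def)

lemma ax_sound: "axiom n \<phi> \<Longrightarrow> i \<in> {1..n} \<Longrightarrow> T i V \<phi>"
proof (induction rule: axiom.induct)
  case (A5 \<phi> ck cr)
  then show ?case by (auto simp: negc_def cocat_def)
next
  case (A6 ck cr)
  then show ?case by (auto simp: botc_def cocat_def)
qed auto

lemma sound: "deriv n {} \<phi> \<Longrightarrow> i \<in> {1..n} \<Longrightarrow> T i V \<phi>"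
  by (induction rule: deriv.induct) (auto simp: ax_sound)

theorem mainTheorem12:
  fixes n :: nat and c :: "nat set" and p q :: nat
  assumes "n \<ge> 2" and "chain n c" and "1 \<le> card c" and "card c \<le> n - 1" and "p \<noteq> q"
  shows "\<not> deriv n {} (Imp (Neg c (Var p)) (Imp (Var p) (Var q)))
       \<and> \<not> deriv n {} (Imp (Imp (Neg c (Var p)) (Neg c (Var q))) (Imp (Var q) (Var p)))
       \<and> \<not> deriv n {} (Imp (Imp (Var p) (Var q)) (Imp (Neg c (Var q)) (Neg c (Var p))))
       \<and> \<not> deriv n {} (Imp (And n (Or n (Var p) (Var q)) (Neg c (Var p))) (Var q))
       \<and> \<not> deriv n {} (Imp (And n (Imp (Var p) (Var q)) (Neg c (Var q))) (Neg c (Var p)))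
       \<and> \<not> deriv n {} (Imp (Neg c (Var p)) (Neg c (And n (Var p) (Var q))))
       \<and> \<not> deriv n {} (Imp (Or n (Neg c (Var p)) (Neg c (Var q))) (Neg c (And n (Var p) (Var q))))
       \<and> \<not> deriv n {} (Imp (Neg c (Or n (Var p) (Var q))) (And n (Neg c (Var p)) (Neg c (Var q))))"
proof -
  have fin: "finite {1..n}" by simp
  have "c \<subseteq> {1..n}" using assms(2) by (simp add: chain_def)
  moreover have "card c < card {1..n}" using assms(1,4) by simp
  ultimately have "{1..n} - c \<noteq> {}" proof (intro notI)
    assume "{1..n} - c = {}"
    then have "{1..n} \<subseteq> c" by blast
    then have "card {1..n} \<le> card c" using \<open>c \<subseteq> {1..n}\<close> fin by (simp add: card_mono finite_subset)
    then show False using \<open>card c < card {1..n}\<close> by simp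
  qed
  then obtain i where i: "i \<in> {1..n}" "i \<notin> c" by blast
  have ii: "1 \<le> i" "i \<le> n" using i(1) by auto
  
  define V1 where "V1 = (\<lambda>r. if r = p then {} else {i})"
  define V2 where "V2 = (\<lambda>r. if r = p then {i} else ({}::nat set))"
  have a: "T i V1 (Var p)" "\<not> T i V1 (Var q)" using assms(5) by (auto simp: T_def V1_def)
  have b: "\<not> T i V2 (Var p)" "T i V2 (Var q)" using assms(5) by (auto simp: T_def V2_def)
  have s1: "\<And>\<phi>. deriv n {} \<phi> \<Longrightarrow> T i V1 \<phi>" using sound i(1) by blast
  have s2: "\<And>\<phi>. deriv n {} \<phi> \<Longrightarrow> T i V2 \<phi>" using sound i(1) by blast
  show ?thesis
    apply (intro conjI notI)
    apply (drule s1, simp add: a i(2) T_And[OF i(1)] T_Or[OF i(1)] T_SNeg[OF i(1)])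
    apply (drule s2, simp add: b i(2) T_And[OF i(1)] T_Or[OF i(1)] T_SNeg[OF i(1)])
    apply (drule s2, simp add: b i(2) T_And[OF i(1)] T_Or[OF i(1)] T_SNeg[OF i(1)])
    apply (drule s1, simp add: a i(2) T_And[OF i(1)] T_Or[OF i(1)] T_SNeg[OF i(1)])
    apply (drule s2, simp add: b i(2) T_And[OF i(1)] T_Or[OF i(1)] T_SNeg[OF i(1)])
    apply (drule s1, simp add: a i(2) T_And[OF i(1)] T_Or[OF i(1)] T_SNeg[OF i(1)])
    apply (drule s1, simp add: a i(2) T_And[OF i(1)] T_Or[OF i(1)] T_SNeg[OF i(1)])
    apply (drule s1, simp add: a i(2) T_And[OF i(1)] T_Or[OF i(1)] T_SNeg[OF i(1)])
    done
qed

end
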